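(* Let $\mathcal{A}\in\mathbb{R}^{n_1\times n_2\times n_3}$ be nonzero, and let $\mathcal{A}=\mathcal{U}*\mathcal{S}*\mathcal{V}^*$ be its t-SVD, with singular values in each Fourier-domain slice ordered nonincreasingly, so that $\mathcal{S}(1,1,:)\neq 0$. Define the rank-one tensor $$\mathcal{M}_1=\mathcal{U}(:,1,:)*\frac{\mathcal{S}(1,1,:)}{\|\mathcal{S}(1,1,:)\|_F}*\mathcal{V}(:,1,:)^*.$$ Then $$\langle \mathcal{M}_1,\mathcal{A}\rangle\;\ge\;\frac{\|\mathcal{A}\|_F}{\sqrt{\min(n_1,n_2)}}.$$
   Context: For $\mathcal{A}\in\mathbb{R}^{n_1\times n_2\times n_3}$, $\hat{\mathcal{A}}$ denotes the discrete Fourier transform of $\mathcal{A}$ along the third dimension (applied to every tube $\mathcal{A}(i,j,:)$), with frontal slices $\hat A^{(k)}=\hat{\mathcal{A}}(:,:,k)$. The t-product $\mathcal{A}*\mathcal{B}$ of $\mathcal{A}\in\mathbb{R}^{n_1\times n_2\times n_3}$ and $\mathcal{B}\in\mathbb{R}^{n_2\times l\times n_3}$ is the $n_1\times l\times n_3$ tensor whose Fourier-domain frontal slices are the matrix products $\hat A^{(k)}\hat B^{(k)}$, $k=1,\dots,n_3$ (equivalently, fold(bcirc($\mathcal{A}$)·unfold($\mathcal{B}$))). The conjugate transpose $\mathcal{A}^*$ is obtained by conjugate-transposing each frontal slice and reversing the order of frontal slices $2,\dots,n_3$. A tensor is f-diagonal if each frontal slice is diagonal. The t-SVD is $\mathcal{A}=\mathcal{U}*\mathcal{S}*\mathcal{V}^*$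 with $\mathcal{U},\mathcal{V}$ orthogonal ($\mathcal{Q}^**\mathcal{Q}=\mathcal{Q}*\mathcal{Q}^*=\mathcal{I}$, where $\mathcal{I}$ has the identity as first frontal slice and zero elsewhere) and $\mathcal{S}$ f-diagonal; it is obtained from SVDs $\hat A^{(k)}=\hat U^{(k)}\hat S^{(k)}\hat V^{(k)*}$ of the Fourier slices, with the diagonal entries of each $\hat S^{(k)}$ in nonincreasing order. $\langle\cdot,\cdot\rangle$ is the entrywise (Frobenius) inner product and $\|\cdot\|_F$ its norm. *)

theory Defs
  imports Complex_Main
begin

text \<open>Real third-order tensors of size n1 x n2 x n3 are represented as functions
  nat => nat => nat => real; only the entries with indices i < n1, j < n2, k < n3
  (0-based) are meaningful.\<close>

type_synonym tensor = "nat \<Rightarrow> nat \<Rightarrow> nat \<Rightarrow> real"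

definition tdft :: "nat \<Rightarrow> tensor \<Rightarrow> nat \<Rightarrow> nat \<Rightarrow> nat \<Rightarrow> complex" where
  "tdft n3 A i j k = (\<Sum>l<n3. complex_of_real (A i j l) * cis (- 2 * pi * real k * real l / real n3))"

text \<open>t-product of an (n1 x n2 x n3) tensor A with an (n2 x l x n3) tensor B:
  fold(bcirc(A) * unfold(B)), i.e. circular convolution of tubes.\<close>
definition tprod :: "nat \<Rightarrow> nat \<Rightarrow> tensor \<Rightarrow> tensor \<Rightarrow> tensor" where
  "tprod n2 n3 A B i j k = (\<Sum>m<n2. \<Sum>l<n3. A i m ((k + n3 - l) mod n3) * B m j l)"

text \<open>Conjugate transpose (real case): transpose each frontal slice and reverse slices 2..n3.\<close>
definition ttrans :: "nat \<Rightarrow> tensor \<Rightarrow> tensor" where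
  "ttrans n3 A i j k = A j i ((n3 - k) mod n3)"

definition tident :: tensor where
  "tident i j k = (if i = j \<and> k = 0 then 1 else 0)"

definition teq :: "nat \<Rightarrow> nat \<Rightarrow> nat \<Rightarrow> tensor \<Rightarrow> tensor \<Rightarrow> bool" where
  "teq n1 n2 n3 A B \<longleftrightarrow> (\<forall>i<n1. \<forall>j<n2. \<forall>k<n3. A i j k = B i j k)"

definition torth :: "nat \<Rightarrow> nat \<Rightarrow> tensor \<Rightarrow> bool" where
  "torth n n3 Q \<longleftrightarrow> teq n n n3 (tprod n n3 (ttrans n3 Q) Q) tident
                    \<and> teq n n n3 (tprod n n3 Q (ttrans n3 Q)) tident"

definition fdiag :: "nat \<Rightarrow> nat \<Rightarrow> nat \<Rightarrow> tensor \<Rightarrow> bool" where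
  "fdiag n1 n2 n3 S \<longleftrightarrow> (\<forall>i<n1. \<forall>j<n2. \<forall>k<n3. i \<noteq> j \<longrightarrow> S i j k = 0)"

definition tinner :: "nat \<Rightarrow> nat \<Rightarrow> nat \<Rightarrow> tensor \<Rightarrow> tensor \<Rightarrow> real" where
  "tinner n1 n2 n3 A B = (\<Sum>i<n1. \<Sum>j<n2. \<Sum>k<n3. A i j k * B i j k)"

definition tfro :: "nat \<Rightarrow> nat \<Rightarrow> nat \<Rightarrow> tensor \<Rightarrow> real" where
  "tfro n1 n2 n3 A = sqrt (tinner n1 n2 n3 A A)"

definition is_tsvd :: "nat \<Rightarrow> nat \<Rightarrow> nat \<Rightarrow> tensor \<Rightarrow> tensor \<Rightarrow> tensor \<Rightarrow> tensor \<Rightarrow> bool" where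
  "is_tsvd n1 n2 n3 A U S V \<longleftrightarrow>
     torth n1 n3 U \<and> torth n2 n3 V \<and> fdiag n1 n2 n3 S \<and>
     teq n1 n2 n3 A (tprod n2 n3 (tprod n1 n3 U S) (ttrans n3 V)) \<and>
     (\<forall>k<n3. \<forall>i<min n1 n2.
        Im (tdft n3 S i i k) = 0 \<and> 0 \<le> Re (tdft n3 S i i k) \<and>
        (Suc i < min n1 n2 \<longrightarrow> Re (tdft n3 S (Suc i) (Suc i) k) \<le> Re (tdft n3 S i i k)))"

definition lat_slice :: "tensor \<Rightarrow> nat \<Rightarrow> tensor" where
  "lat_slice Q j = (\<lambda>i _ k. Q i j k)"

definition tube :: "tensor \<Rightarrow> nat \<Rightarrow> nat \<Rightarrow> tensor" where
  "tube T i j = (\<lambda>_ _ k. T i j k)"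

text \<open>M1 = U(:,1,:) * (S(1,1,:) / ||S(1,1,:)||_F) * V(:,1,:)^*  (first index is 0 here).\<close>
definition rank1_M1 :: "nat \<Rightarrow> tensor \<Rightarrow> tensor \<Rightarrow> tensor \<Rightarrow> tensor" where
  "rank1_M1 n3 U S V =
     tprod 1 n3
       (tprod 1 n3 (lat_slice U 0) (\<lambda>a b k. tube S 0 0 a b k / tfro 1 1 n3 (tube S 0 0)))
       (ttrans n3 (lat_slice V 0))"

end

theory Submission
  imports Defs
begin


lemma roots_sum0:
  fixes d :: int and n :: nat
  assumes "d \<noteq> 0" "\<bar>d\<bar> < int n"
  shows "(\<Sum>k<n. cis (2 * pi * real k * of_int d / real n)) = 0"
proof -
  define w where "w = cis (2 * pi * of_int d / real n)"
  have n0: "n > 0" using assms by linarith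
  have "w \<noteq> 1"
  proof
    assume "w = 1"
    then obtain m :: int where m: "2 * pi * of_int d / real n = of_int m * 2 * pi"
      by (auto simp: w_def complex_eq_iff cos_one_2pi_int)
    hence "of_int d = real n * of_int m" using n0 by (simp add: field_simps)
    hence "d = int n * m" by (metis of_int_eq_iff of_int_mult of_int_of_nat_eq)
    moreover have "m \<noteq> 0" using assms calculation by auto
    ultimately have "\<bar>d\<bar> \<ge> int n" by (simp add: abs_mult)
       (metis abs_ge_zero abs_of_nonneg abs_mult dual_order.refl mult_le_cancel_left1 mult_left_mono abs_ge_self of_nat_0_le_iff order_trans zero_less_abs_iff int_one_le_iff_zero_less linorder_not_le mult.comm_neutral mult_le_cancel_left1)
    thus False using assms by simp
  qed
  have "(\<Sum>k<n. cis (2 * pi * real k * of_int d / real n)) = (\<Sum>k<n. w ^ k)"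
    by (intro sum.cong refl) (auto simp: w_def DeMoivre mult_ac)
  also have "\<dots> = (w ^ n - 1) / (w - 1)"
    using \<open>w \<noteq> 1\<close> by (subst geometric_sum) auto
  also have "w ^ n = cis (2 * pi * of_int d)" using n0 by (simp add: w_def DeMoivre)
  also have "\<dots> = 1" by (simp add: complex_eq_iff)
  finally show ?thesis by simp
qed



lemma roots_delta:
  assumes "l < n" "l' < n"
  shows "(\<Sum>k<n. cis (2 * pi * real k * (real l' - real l) / real n)) = (if l = l' then of_nat n else 0)"
proof (cases "l = l'")
  case True thus ?thesis by simp
next
  case False
  have "(\<Sum>k<n. cis (2 * pi * real k * (real l' - real l) / real n)) =
        (\<Sum>k<n. cis (2 * pi * real k * of_int (int l' - int l) / real n))" by simp
  also have "\<dots> = 0" using False assms by (intro roots_sum0) auto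
  finally show ?thesis using False by simp
qed

lemma parseval:
  fixes x :: "nat \<Rightarrow> real"
  shows "(\<Sum>k<n. (cmod (\<Sum>l<n. complex_of_real (x l) * cis (- 2 * pi * real k * real l / real n)))\<^sup>2)
         = real n * (\<Sum>l<n. (x l)\<^sup>2)"
proof -
  define z where "z k = (\<Sum>l<n. complex_of_real (x l) * cis (- 2 * pi * real k * real l / real n))" for k
  have zz: "z k * cnj (z k) = (\<Sum>l<n. \<Sum>l'<n. complex_of_real (x l * x l') *
              cis (2 * pi * real k * (real l' - real l) / real n))" for k
    unfolding z_def cnj_sum sum_product
    by (intro sum.cong refl) (simp add: cis_cnj cis_mult algebra_simps diff_divide_distrib)
  have "(\<Sum>k<n. complex_of_real ((cmod (z k))\<^sup>2)) = (\<Sum>k<n. z k * cnj (z k))"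
    by (intro sum.cong refl) (rule complex_norm_square)
  also have "\<dots> = (\<Sum>l<n. \<Sum>l'<n. complex_of_real (x l * x l') *
              (\<Sum>k<n. cis (2 * pi * real k * (real l' - real l) / real n)))"
    unfolding zz sum_distrib_left
    by (rule trans[OF sum.swap], rule sum.cong[OF refl], rule sum.swap)
  also have "\<dots> = (\<Sum>l<n. \<Sum>l'<n. complex_of_real (x l * x l') * (if l = l' then of_nat n else 0))"
    by (intro sum.cong refl) (simp add: roots_delta)
  also have "\<dots> = (\<Sum>l<n. complex_of_real (x l * x l) * of_nat n)"
    by (simp add: if_distrib sum.delta cong: if_cong)
  also have "\<dots> = complex_of_real (real n * (\<Sum>l<n. (x l)\<^sup>2))"
    by (simp add: sum_distrib_left power2_eq_square mult_ac)
  finally have "complex_of_real (\<Sum>k<n. (cmod (z k))\<^sup>2) = complex_of_real (real n * (\<Sum>l<n. (x l)\<^sup>2))"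
    by simp
  thus ?thesis unfolding z_def of_real_eq_iff .
qed



lemma mod2: "(a::nat) < 2*n \<Longrightarrow> a mod n = (if a < n then a else a - n)"
  by (simp add: le_mod_geq)

lemma perm5: "(\<Sum>i\<in>A. \<Sum>j\<in>B. \<Sum>k\<in>C. \<Sum>m\<in>D. \<Sum>l\<in>E. f i j k m l)
  = (\<Sum>m\<in>D. \<Sum>j\<in>B. \<Sum>l\<in>E. \<Sum>i\<in>A. \<Sum>k\<in>C. f i j k m l)"
  by (simp only: sum.swap[of _ C D] sum.swap[of _ C E] sum.swap[of _ B D] sum.swap[of _ A D]
       sum.swap[of _ A B] sum.swap[of _ A E])

lemma reindex_add:
  fixes f :: "nat \<Rightarrow> 'a::comm_monoid_add"
  assumes "c < n"
  shows "(\<Sum>t<n. f ((t + c) mod n)) = (\<Sum>t<n. f t)"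
proof (rule sum.reindex_bij_witness[where j="\<lambda>t. (t + c) mod n" and i="\<lambda>s. (s + n - c) mod n"])
  fix a assume "a \<in> {..<n}" thus "((a + c) mod n + n - c) mod n = a" using assms by (auto simp: mod2)
next
  fix a assume "a \<in> {..<n}" thus "(a + c) mod n \<in> {..<n}" using assms by auto
next
  fix a assume "a \<in> {..<n}" thus "((a + n - c) mod n + c) mod n = a" using assms by (auto simp: mod2)
next
  fix a assume "a \<in> {..<n}" thus "(a + n - c) mod n \<in> {..<n}" using assms by auto
qed simp

lemma negneg: "b < n \<Longrightarrow> (n - (n - b) mod n) mod (n::nat) = b"
  by (auto simp: mod2)

lemma reindex_neg:
  fixes f :: "nat \<Rightarrow> 'a::comm_monoid_add"
  shows "(\<Sum>t<n. f ((n - t) mod n)) = (\<Sum>t<n. f t)"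
proof (rule sum.reindex_bij_witness[where j="\<lambda>t. (n - t) mod n" and i="\<lambda>t. (n - t) mod n"])
  fix a assume "a \<in> {..<n}" thus "(n - (n - a) mod n) mod n = a" by (auto simp: mod2)
next
  fix a assume "a \<in> {..<n}" thus "(n - a) mod n \<in> {..<n}" by auto
qed (auto simp: negneg)



lemma tprod_cong:
  assumes "\<And>m l. m < p \<Longrightarrow> l < n \<Longrightarrow> X i m l = X' i m l"
    "\<And>m l. m < p \<Longrightarrow> l < n \<Longrightarrow> Y m j l = Y' m j l" "0 < n"
  shows "tprod p n X Y i j k = tprod p n X' Y' i j k"
  unfolding tprod_def using assms by (intro sum.cong refl) auto

lemma tinner_cong:
  assumes "\<And>i j k. i < n1 \<Longrightarrow> j < n2 \<Longrightarrow> k < n \<Longrightarrow> X i j k = X' i j k"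
    "\<And>i j k. i < n1 \<Longrightarrow> j < n2 \<Longrightarrow> k < n \<Longrightarrow> Z i j k = Z' i j k"
  shows "tinner n1 n2 n X Z = tinner n1 n2 n X' Z'"
  unfolding tinner_def using assms by (intro sum.cong refl) auto

lemma sum_delta_r: "(a::nat) < n \<Longrightarrow> (\<Sum>l<n. f l * (if l = a then 1 else 0)) = (f a :: 'a::comm_ring_1)"
proof -
  assume a: "a < n"
  have "(\<Sum>l<n. f l * (if l = a then 1 else 0)) = (\<Sum>l<n. if l = a then f a else 0)"
    by (intro sum.cong) auto
  also have "\<dots> = f a" using a by simp
  finally show ?thesis .
qed

lemma sum_delta_l: "(a::nat) < n \<Longrightarrow> (\<Sum>l<n. (if l = a then 1 else 0) * f l) = (f a :: 'a::comm_ring_1)"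
  using sum_delta_r[of a n f] by (simp add: mult.commute)

lemma perm3: "(\<Sum>a\<in>A. \<Sum>b\<in>B. \<Sum>c\<in>C. f a b c) = (\<Sum>c\<in>C. \<Sum>a\<in>A. \<Sum>b\<in>B. f a b c)"
  by (simp only: sum.swap[of _ B C] sum.swap[of _ A C])

lemma modzero: "k < n \<Longrightarrow> l < n \<Longrightarrow> ((k + n - l) mod n = 0) = (l = (k::nat))"
  by (auto simp: mod2)

lemma tprod_ident_right:
  assumes "j < q" "k < n"
  shows "tprod q n X tident i j k = X i j k"
proof -
  have "tprod q n X tident i j k = (\<Sum>m<q. if m = j then (\<Sum>l<n. X i m ((k + n - l) mod n) * (if l = 0 then 1 else 0)) else 0)"
    unfolding tprod_def tident_def by (intro sum.cong refl) auto
  also have "\<dots> = (\<Sum>m<q. if m = j then X i m ((k + n) mod n) else 0)"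
    using assms by (intro sum.cong refl) (simp add: sum_delta_r[where a=0, simplified])
  also have "\<dots> = X i j k" using assms by simp
  finally show ?thesis .
qed

lemma tprod_ident_left:
  assumes "i < q" "k < n"
  shows "tprod q n tident X i j k = X i j k"
proof -
  have "tprod q n tident X i j k = (\<Sum>m<q. if m = i then (\<Sum>l<n. (if l = k then 1 else 0) * X m j l) else 0)"
    unfolding tprod_def tident_def using assms by (intro sum.cong refl) (auto simp: modzero)
  also have "\<dots> = X i j k" using assms by (simp add: sum_delta_l)
  finally show ?thesis .
qed

lemma ttrans_ttrans: "k < n \<Longrightarrow> ttrans n (ttrans n X) i j k = X i j k"
  by (simp add: ttrans_def negneg)

lemma mod_id1: "t < n \<Longrightarrow> l < n \<Longrightarrow> ((t + l) mod n + n - l) mod (n::nat) = t"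
  by (auto simp: mod2)

lemma mod_id2: "t < n \<Longrightarrow> l < n \<Longrightarrow> k < n \<Longrightarrow>
   (k + n - (t + l) mod n) mod (n::nat) = ((k + n - l) mod n + n - t) mod n"
  by (auto simp: mod2)

lemma mod_id3: "k < n \<Longrightarrow> l < n \<Longrightarrow> (n - (l + n - k) mod n) mod (n::nat) = (k + n - l) mod n"
  by (auto simp: mod2)

lemma mod_id4: "t < n \<Longrightarrow> b < n \<Longrightarrow> (t + n - (n - b) mod n) mod (n::nat) = (t + b) mod n"
  by (auto simp: mod2)

lemma tprod_assoc:
  assumes "k < n"
  shows "tprod q n (tprod p n X Y) Z i j k = tprod p n X (tprod q n Y Z) i j k"
proof -
  have "tprod q n (tprod p n X Y) Z i j k =
     (\<Sum>m'<q. \<Sum>l<n. \<Sum>m<p. \<Sum>t<n. X i m (((k + n - l) mod n + n - t) mod n) * Y m m' t * Z m' j l)"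
    unfolding tprod_def sum_distrib_right by simp
  also have "\<dots> = (\<Sum>m<p. \<Sum>m'<q. \<Sum>l<n. \<Sum>t<n. X i m (((k + n - l) mod n + n - t) mod n) * Y m m' t * Z m' j l)"
    by (simp only: sum.swap[of _ "{..<q}" "{..<p}"] sum.swap[of _ "{..<n}" "{..<p}"])
  also have "\<dots> = (\<Sum>m<p. \<Sum>m'<q. \<Sum>l<n. \<Sum>t<n. X i m ((k + n - (t + l) mod n) mod n) * Y m m' (((t + l) mod n + n - l) mod n) * Z m' j l)"
    using assms by (intro sum.cong refl) (simp add: mod_id1 mod_id2)
  also have "\<dots> = (\<Sum>m<p. \<Sum>m'<q. \<Sum>l<n. \<Sum>t<n. X i m ((k + n - t) mod n) * Y m m' ((t + n - l) mod n) * Z m' j l)"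
    by (rule sum.cong[OF refl], rule sum.cong[OF refl], rule sum.cong[OF refl], rule reindex_add[where f="\<lambda>s. X i m ((k + n - s) mod n) * Y m m' ((s + n - l) mod n) * Z m' j l" for m m' l], simp)
  also have "\<dots> = (\<Sum>m<p. \<Sum>t<n. \<Sum>m'<q. \<Sum>l<n. X i m ((k + n - t) mod n) * (Y m m' ((t + n - l) mod n) * Z m' j l))"
    by (rule sum.cong[OF refl], rule trans[OF perm3]) (simp only: mult.assoc)
  also have "\<dots> = tprod p n X (tprod q n Y Z) i j k"
    unfolding tprod_def sum_distrib_left ..
  finally show ?thesis .
qed



lemma perm4: "(\<Sum>j\<in>B. \<Sum>k\<in>C. \<Sum>m\<in>D. \<Sum>l\<in>E. f j k m l)
  = (\<Sum>m\<in>D. \<Sum>j\<in>B. \<Sum>l\<in>E. \<Sum>k\<in>C. f j k m l)"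
  by (simp only: sum.swap[of _ C D] sum.swap[of _ B D] sum.swap[of _ C E])

lemma adj1:
  "tinner n1 n2 n (tprod p n X Y) Z = tinner p n2 n Y (tprod n1 n (ttrans n X) Z)"
proof -
  have "tinner n1 n2 n (tprod p n X Y) Z =
     (\<Sum>i<n1. \<Sum>j<n2. \<Sum>k<n. \<Sum>m<p. \<Sum>l<n. X i m ((k + n - l) mod n) * Y m j l * Z i j k)"
    unfolding tinner_def tprod_def sum_distrib_right ..
  also have "\<dots> = (\<Sum>m<p. \<Sum>j<n2. \<Sum>l<n. \<Sum>i<n1. \<Sum>k<n. X i m ((k + n - l) mod n) * Y m j l * Z i j k)"
    by (rule perm5)
  also have "\<dots> = (\<Sum>m<p. \<Sum>j<n2. \<Sum>l<n. \<Sum>i<n1. \<Sum>k<n. Y m j l * (X i m ((n - (l + n - k) mod n) mod n) * Z i j k))"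
    by (intro sum.cong refl) (simp add: mod_id3)
  also have "\<dots> = tinner p n2 n Y (tprod n1 n (ttrans n X) Z)"
    unfolding tinner_def tprod_def ttrans_def sum_distrib_left ..
  finally show ?thesis .
qed

lemma adj2:
  "tinner n1 n2 n (tprod p n X Y) Z = tinner n1 p n X (tprod n2 n Z (ttrans n Y))"
proof -
  have "tinner n1 n2 n (tprod p n X Y) Z =
     (\<Sum>i<n1. \<Sum>j<n2. \<Sum>k<n. \<Sum>m<p. \<Sum>l<n. X i m ((k + n - l) mod n) * Y m j l * Z i j k)"
    unfolding tinner_def tprod_def sum_distrib_right ..
  also have "\<dots> = (\<Sum>i<n1. \<Sum>m<p. \<Sum>j<n2. \<Sum>l<n. \<Sum>k<n. X i m ((k + n - l) mod n) * Y m j l * Z i j k)"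
    by (rule sum.cong[OF refl], rule perm4)
  also have "\<dots> = (\<Sum>i<n1. \<Sum>m<p. \<Sum>j<n2. \<Sum>l<n. \<Sum>t<n. X i m (((t + l) mod n + n - l) mod n) * Y m j l * Z i j ((t + l) mod n))"
    by (rule sum.cong[OF refl], rule sum.cong[OF refl], rule sum.cong[OF refl], rule sum.cong[OF refl],
        rule reindex_add[where f="\<lambda>s. X i m ((s + n - l) mod n) * Y m j l * Z i j s" for i m j l, symmetric], simp)
  also have "\<dots> = (\<Sum>i<n1. \<Sum>m<p. \<Sum>j<n2. \<Sum>l<n. \<Sum>t<n. X i m t * (Z i j ((t + l) mod n) * Y m j l))"
    by (intro sum.cong refl) (simp add: mod_id1)
  also have "\<dots> = (\<Sum>i<n1. \<Sum>m<p. \<Sum>t<n. \<Sum>j<n2. \<Sum>l<n. X i m t * (Z i j ((t + l) mod n) * Y m j l))"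
    by (rule sum.cong[OF refl], rule sum.cong[OF refl], rule perm3)
  also have "\<dots> = (\<Sum>i<n1. \<Sum>m<p. \<Sum>t<n. \<Sum>j<n2. \<Sum>l<n. X i m t * (Z i j ((t + n - (n - l) mod n) mod n) * Y m j ((n - (n - l) mod n) mod n)))"
    by (intro sum.cong refl) (simp add: mod_id4 negneg)
  also have "\<dots> = (\<Sum>i<n1. \<Sum>m<p. \<Sum>t<n. \<Sum>j<n2. \<Sum>l<n. X i m t * (Z i j ((t + n - l) mod n) * Y m j ((n - l) mod n)))"
    by (rule sum.cong[OF refl], rule sum.cong[OF refl], rule sum.cong[OF refl], rule sum.cong[OF refl],
        rule reindex_neg[where f="\<lambda>s. X i m t * (Z i j ((t + n - s) mod n) * Y m j ((n - s) mod n))" for i m t j])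
  also have "\<dots> = tinner n1 p n X (tprod n2 n Z (ttrans n Y))"
    unfolding tinner_def tprod_def ttrans_def sum_distrib_left ..
  finally show ?thesis .
qed



lemma right_cancel:
  assumes "torth n2 n V" "j < n2" "k < n" "0 < n"
  shows "tprod n2 n (tprod n2 n W (ttrans n V)) V i j k = W i j k"
proof -
  have "tprod n2 n (tprod n2 n W (ttrans n V)) V i j k = tprod n2 n W (tprod n2 n (ttrans n V) V) i j k"
    using assms by (simp add: tprod_assoc)
  also have "\<dots> = tprod n2 n W tident i j k"
    using assms by (intro tprod_cong) (auto simp: torth_def teq_def)
  also have "\<dots> = W i j k" using assms by (simp add: tprod_ident_right)
  finally show ?thesis .
qed

lemma left_cancel:
  assumes "torth n1 n U" "i < n1" "k < n" "0 < n"
  shows "tprod n1 n (ttrans n U) (tprod n1 n U S) i j k = S i j k"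
proof -
  have "tprod n1 n (ttrans n U) (tprod n1 n U S) i j k = tprod n1 n (tprod n1 n (ttrans n U) U) S i j k"
    using assms by (simp add: tprod_assoc)
  also have "\<dots> = tprod n1 n tident S i j k"
    using assms by (intro tprod_cong) (auto simp: torth_def teq_def)
  also have "\<dots> = S i j k" using assms by (simp add: tprod_ident_left)
  finally show ?thesis .
qed

theorem lemma2p2:
  fixes n1 n2 n3 :: nat and A U S V :: tensor
  assumes nonzero: "\<exists>i<n1. \<exists>j<n2. \<exists>k<n3. A i j k \<noteq> 0"
    and tsvd: "is_tsvd n1 n2 n3 A U S V"
  shows "tinner n1 n2 n3 (rank1_M1 n3 U S V) A \<ge> tfro n1 n2 n3 A / sqrt (real (min n1 n2))"
proof -
  define n where "n = n3"
  have n1: "0 < n1" and n2: "0 < n2" and n: "0 < n" using nonzero n_def by auto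
  have oU: "torth n1 n U" and oV: "torth n2 n V" and fd: "fdiag n1 n2 n S"
    and spec: "\<forall>k<n. \<forall>i<min n1 n2. Im (tdft n S i i k) = 0 \<and> 0 \<le> Re (tdft n S i i k) \<and>
        (Suc i < min n1 n2 \<longrightarrow> Re (tdft n S (Suc i) (Suc i) k) \<le> Re (tdft n S i i k))"
    using tsvd unfolding is_tsvd_def n_def by auto
  define W where "W = tprod n1 n U S"
  define A' where "A' = tprod n2 n W (ttrans n V)"
  have eqA: "\<And>i j k. i < n1 \<Longrightarrow> j < n2 \<Longrightarrow> k < n \<Longrightarrow> A i j k = A' i j k"
    using tsvd unfolding is_tsvd_def teq_def A'_def W_def n_def by auto
  have QW: "tprod n2 n A' (ttrans n (ttrans n V)) i j k = W i j k" if "j < n2" "k < n" for i j k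
  proof -
    have "tprod n2 n A' (ttrans n (ttrans n V)) i j k = tprod n2 n A' V i j k"
      using n by (intro tprod_cong) (auto simp: ttrans_ttrans)
    also have "\<dots> = W i j k" unfolding A'_def using right_cancel[OF oV that n] .
    finally show ?thesis .
  qed
  have SW: "tprod n1 n (ttrans n U) W i j k = S i j k" if "i < n1" "k < n" for i j k
    unfolding W_def using left_cancel[OF oU that n] .
  have normA: "tinner n1 n2 n A A = tinner n1 n2 n S S"
  proof -
    have "tinner n1 n2 n A A = tinner n1 n2 n A' A'" by (intro tinner_cong) (auto simp: eqA)
    also have "\<dots> = tinner n1 n2 n W (tprod n2 n A' (ttrans n (ttrans n V)))"
      unfolding A'_def by (rule adj2)
    also have "\<dots> = tinner n1 n2 n W W" by (intro tinner_cong) (auto simp: QW)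
    also have "\<dots> = tinner n1 n2 n S (tprod n1 n (ttrans n U) W)"
      unfolding W_def by (rule adj1)
    also have "\<dots> = tinner n1 n2 n S S" by (intro tinner_cong) (auto simp: SW)
    finally show ?thesis .
  qed

  define g where "g i = (\<Sum>k<n. S i i k * S i i k)" for i
  define c where "c = tfro 1 1 n (tube S 0 0)"
  have c_eq: "c = sqrt (g 0)"
    unfolding c_def g_def tfro_def tinner_def tube_def by simp
  define U1 where "U1 = lat_slice U 0"
  define V1 where "V1 = lat_slice V 0"
  define s' where "s' = (\<lambda>a b k. tube S 0 0 a b k / c)"
  have M1: "rank1_M1 n3 U S V = tprod 1 n (tprod 1 n U1 s') (ttrans n V1)"
    unfolding rank1_M1_def U1_def V1_def s'_def c_def n_def ..
  have P: "tprod n1 n (ttrans n U1) (tprod n2 n A' (ttrans n (ttrans n V1))) 0 0 k = S 0 0 k"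
    if "k < n" for k
  proof -
    have "tprod n1 n (ttrans n U1) (tprod n2 n A' (ttrans n (ttrans n V1))) 0 0 k
        = tprod n1 n (ttrans n U) W 0 0 k"
    proof (rule tprod_cong[OF _ _ n])
      fix m l assume "m < n1" "l < n"
      show "ttrans n U1 0 m l = ttrans n U 0 m l" unfolding U1_def ttrans_def lat_slice_def ..
      have "tprod n2 n A' (ttrans n (ttrans n V1)) m 0 l = tprod n2 n A' V1 m 0 l"
        using n by (intro tprod_cong) (auto simp: ttrans_ttrans)
      also have "\<dots> = tprod n2 n A' V m 0 l"
        unfolding V1_def tprod_def lat_slice_def ..
      also have "\<dots> = W m 0 l" unfolding A'_def using right_cancel[OF oV n2 \<open>l < n\<close> n] .
      finally show "tprod n2 n A' (ttrans n (ttrans n V1)) m 0 l = W m 0 l" .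
    qed
    also have "\<dots> = S 0 0 k" using SW[OF n1 that] .
    finally show ?thesis .
  qed
  have inner: "tinner n1 n2 n (rank1_M1 n3 U S V) A = c"
  proof -
    have "tinner n1 n2 n (rank1_M1 n3 U S V) A = tinner n1 n2 n (rank1_M1 n3 U S V) A'"
      by (intro tinner_cong) (auto simp: eqA)
    also have "\<dots> = tinner n1 1 n (tprod 1 n U1 s') (tprod n2 n A' (ttrans n (ttrans n V1)))"
      unfolding M1 by (rule adj2)
    also have "\<dots> = tinner 1 1 n s' (tprod n1 n (ttrans n U1) (tprod n2 n A' (ttrans n (ttrans n V1))))"
      by (rule adj1)
    also have "\<dots> = tinner 1 1 n s' (tube S 0 0)"
      by (intro tinner_cong) (auto simp: P tube_def)
    also have "\<dots> = g 0 / c"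
      unfolding tinner_def s'_def tube_def g_def by (simp add: sum_divide_distrib)
    also have "\<dots> = c"
      unfolding c_eq g_def by (cases "(\<Sum>k<n. S 0 0 k * S 0 0 k) = 0")
        (simp_all add: divide_simps sum_nonneg)
    finally show ?thesis .
  qed
  have diagS: "tinner n1 n2 n S S = (\<Sum>i<min n1 n2. g i)"
  proof -
    have "tinner n1 n2 n S S = (\<Sum>i<n1. if i < n2 then g i else 0)"
      unfolding tinner_def
    proof (intro sum.cong refl)
      fix i assume i: "i \<in> {..<n1}"
      have "(\<Sum>j<n2. \<Sum>k<n. S i j k * S i j k) = (\<Sum>j<n2. if i = j then g i else 0)"
        using fd i by (intro sum.cong refl) (auto simp: fdiag_def g_def)
      also have "\<dots> = (if i < n2 then g i else 0)" by simp
      finally show "(\<Sum>j<n2. \<Sum>k<n. S i j k * S i j k) = (if i < n2 then g i else 0)" .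
    qed
    also have "\<dots> = (\<Sum>i\<in>{..<n1} \<inter> {..<n2}. g i)"
      by (subst sum.inter_restrict) auto
    also have "{..<n1} \<inter> {..<n2} = {..<min n1 n2}" by auto
    finally show ?thesis .
  qed
  have mono: "Re (tdft n S i i k) \<le> Re (tdft n S 0 0 k)" if "i < min n1 n2" "k < n" for i k
    using that
  proof (induction i)
    case 0 thus ?case by simp
  next
    case (Suc i)
    hence "Re (tdft n S (Suc i) (Suc i) k) \<le> Re (tdft n S i i k)" using spec by auto
    with Suc show ?case by simp
  qed
  have cm: "cmod (tdft n S i i k) = Re (tdft n S i i k)" if "i < min n1 n2" "k < n" for i k
  proof -
    have "Im (tdft n S i i k) = 0" "0 \<le> Re (tdft n S i i k)" using spec that by auto
    thus ?thesis by (simp add: cmod_def)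
  qed
  have gbound: "g i \<le> g 0" if "i < min n1 n2" for i
  proof -
    have pars: "(\<Sum>k<n. (cmod (tdft n S j j k))\<^sup>2) = real n * g j" for j
      unfolding tdft_def g_def using parseval[where n=n and x="\<lambda>l. S j j l"] by (simp add: power2_eq_square)
    have "(\<Sum>k<n. (cmod (tdft n S i i k))\<^sup>2) \<le> (\<Sum>k<n. (cmod (tdft n S 0 0 k))\<^sup>2)"
    proof (intro sum_mono)
      fix k assume "k \<in> {..<n}"
      hence k: "k < n" by simp
      have z: "0 < min n1 n2" using that by simp
      show "(cmod (tdft n S i i k))\<^sup>2 \<le> (cmod (tdft n S 0 0 k))\<^sup>2"
        using cm[OF that k] cm[OF z k] mono[OF that k] norm_ge_zero[of "tdft n S i i k"] by (intro power_mono) auto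
    qed
    hence "real n * g i \<le> real n * g 0" unfolding pars .
    thus ?thesis using n by simp
  qed
  have g0: "0 \<le> g 0" unfolding g_def by (intro sum_nonneg) auto
  have "tinner n1 n2 n S S \<le> real (min n1 n2) * g 0"
    unfolding diagS using sum_mono[of "{..<min n1 n2}" g "\<lambda>_. g 0"] gbound by simp
  hence "tfro n1 n2 n A \<le> sqrt (real (min n1 n2) * g 0)"
    unfolding tfro_def normA by simp
  also have "\<dots> = sqrt (real (min n1 n2)) * c" unfolding c_eq by (simp add: real_sqrt_mult)
  finally have "tfro n1 n2 n A / sqrt (real (min n1 n2)) \<le> c"
    using n1 n2 by (simp add: divide_simps mult.commute)
  thus ?thesis using inner unfolding n_def by simp
qed


end
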